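(* Let $p$ be a prime, and let $G$ and $A$ be finite abelian $p$-groups (written additively). For a $2$-cocycle $\alpha\colon G\times G\to A$ let $E(\alpha)$ be the group with underlying set $A\times G$ and multiplication $(a_1,g_1)(a_2,g_2)=(a_1+a_2+\alpha(g_1,g_2),g_1+g_2)$, and put $\eta^\alpha(g_1,g_2)=\alpha(g_1,g_2)-\alpha(g_2,g_1)$. Let $\alpha,\alpha'$ be $2$-cocycles such that the image of $\eta^\alpha$ generates $A$ and the image of $\eta^{\alpha'}$ generates $A$ (equivalently $[E(\alpha),E(\alpha)]=[E(\alpha'),E(\alpha')]=A$). An endomorphism $\varphi\in\mathrm{End}(G)$ can be lifted to a homomorphism $\phi\colon E(\alpha)\to E(\alpha')$ (i.e. a homomorphism with $\phi(a,g)\in A\times\{\varphi(g)\}$ for all $(a,g)$) if and only if there exists $\psi\in\mathrm{End}(A)$ such that $$\psi(\eta^{\alpha}(g_1,g_2))=\eta^{\alpha'}(\varphi(g_1),\varphi(g_2))\quad\text{for all } g_1,g_2\in G,\qquad \varphi^\ast([\alpha'])=\psi_\ast([\alpha])\ \text{in } H^2(G;A).$$ When these hold, each such lift $\phi$ is given by $\phi(a,g)=(\psi(a)+\mu(g),\varphi(g))$ for a unique function $\mu\colon G\to A$ satisfying $\delta\mu=\psi_\ast(\alpha)-\varphi^\ast(\alpha')$, where $(\delta\mu)(g_1,g_2)=\mu(g_1)+\mu(g_2)-\mu(g_1+g_2)$. In particular, an automorphism $\varphi\in\mathrm{Aut}(G)$ can be lifted to an isomorphism $E(\alpha)\to E(\alpha')$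 if and only if there exists $\psi\in\mathrm{Aut}(A)$ such that $\psi(\eta^{\alpha}(g_1,g_2))=\eta^{\alpha'}(\varphi(g_1),\varphi(g_2))$ for all $g_1,g_2\in G$ and $\varphi^\ast([\alpha'])=\psi_\ast([\alpha])$.
   Context: A $2$-cocycle is a function $\alpha\colon G\times G\to A$ with $\alpha(g_1,g_2)-\alpha(g_1,g_2+g_3)+\alpha(g_1+g_2,g_3)-\alpha(g_2,g_3)=0$ for all $g_i\in G$. For $\varphi\in\mathrm{End}(G)$ and $\psi\in\mathrm{End}(A)$, $(\varphi^\ast\alpha)(g_1,g_2)=\alpha(\varphi(g_1),\varphi(g_2))$ and $(\psi_\ast\alpha)(g_1,g_2)=\psi(\alpha(g_1,g_2))$; these induce the maps $\varphi^\ast,\psi_\ast$ on $H^2(G;A)$. *)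

theory Defs
  imports Main "HOL-Computational_Algebra.Primes"
begin

definition add_hom :: "('a::ab_group_add \<Rightarrow> 'b::ab_group_add) \<Rightarrow> bool" where
  "add_hom f \<longleftrightarrow> (\<forall>x y. f (x + y) = f x + f y)"

definition is_p_group :: "nat \<Rightarrow> 'a::ab_group_add set \<Rightarrow> bool" where
  "is_p_group p S \<longleftrightarrow> finite S \<and> (\<exists>k. card S = p ^ k)"

definition add_subgroup :: "'a::ab_group_add set \<Rightarrow> bool" where
  "add_subgroup H \<longleftrightarrow> 0 \<in> H \<and> (\<forall>x\<in>H. \<forall>y\<in>H. x + y \<in> H) \<and> (\<forall>x\<in>H. - x \<in> H)"

definition gen_subgroup :: "'a::ab_group_add set \<Rightarrow> 'a set" where
  "gen_subgroup S = \<Inter>{H. add_subgroup H \<and> S \<subseteq> H}"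

definition cocycle :: "('g::ab_group_add \<Rightarrow> 'g \<Rightarrow> 'a::ab_group_add) \<Rightarrow> bool" where
  "cocycle \<alpha> \<longleftrightarrow> (\<forall>g1 g2 g3.
     \<alpha> g1 g2 - \<alpha> g1 (g2 + g3) + \<alpha> (g1 + g2) g3 - \<alpha> g2 g3 = 0)"

definition emul :: "('g::ab_group_add \<Rightarrow> 'g \<Rightarrow> 'a::ab_group_add) \<Rightarrow> 'a \<times> 'g \<Rightarrow> 'a \<times> 'g \<Rightarrow> 'a \<times> 'g" where
  "emul \<alpha> x y = (fst x + fst y + \<alpha> (snd x) (snd y), snd x + snd y)"

definition eta :: "('g \<Rightarrow> 'g \<Rightarrow> 'a::ab_group_add) \<Rightarrow> 'g \<Rightarrow> 'g \<Rightarrow> 'a" where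
  "eta \<alpha> g1 g2 = \<alpha> g1 g2 - \<alpha> g2 g1"

definition coboundary :: "('g::ab_group_add \<Rightarrow> 'a::ab_group_add) \<Rightarrow> 'g \<Rightarrow> 'g \<Rightarrow> 'a" where
  "coboundary \<mu> g1 g2 = \<mu> g1 + \<mu> g2 - \<mu> (g1 + g2)"

definition pullback :: "('g \<Rightarrow> 'g) \<Rightarrow> ('g \<Rightarrow> 'g \<Rightarrow> 'a) \<Rightarrow> 'g \<Rightarrow> 'g \<Rightarrow> 'a" where
  "pullback \<phi> \<alpha> g1 g2 = \<alpha> (\<phi> g1) (\<phi> g2)"

definition pushforward :: "('a \<Rightarrow> 'a) \<Rightarrow> ('g \<Rightarrow> 'g \<Rightarrow> 'a) \<Rightarrow> 'g \<Rightarrow> 'g \<Rightarrow> 'a" where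
  "pushforward \<psi> \<alpha> g1 g2 = \<psi> (\<alpha> g1 g2)"

definition cohomologous :: "('g::ab_group_add \<Rightarrow> 'g \<Rightarrow> 'a::ab_group_add) \<Rightarrow> ('g \<Rightarrow> 'g \<Rightarrow> 'a) \<Rightarrow> bool" where
  "cohomologous \<alpha> \<beta> \<longleftrightarrow> (\<exists>\<mu>. \<forall>g1 g2. \<alpha> g1 g2 - \<beta> g1 g2 = coboundary \<mu> g1 g2)"

definition ext_hom :: "('g::ab_group_add \<Rightarrow> 'g \<Rightarrow> 'a::ab_group_add) \<Rightarrow> ('g \<Rightarrow> 'g \<Rightarrow> 'a) \<Rightarrow> ('a \<times> 'g \<Rightarrow> 'a \<times> 'g) \<Rightarrow> bool" where
  "ext_hom \<alpha> \<alpha>' \<Phi> \<longleftrightarrow> (\<forall>x y. \<Phi> (emul \<alpha> x y) = emul \<alpha>' (\<Phi> x) (\<Phi> y))"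

definition is_lift :: "('g \<Rightarrow> 'g) \<Rightarrow> ('a \<times> 'g \<Rightarrow> 'a \<times> 'g) \<Rightarrow> bool" where
  "is_lift \<phi> \<Phi> \<longleftrightarrow> (\<forall>a g. snd (\<Phi> (a, g)) = \<phi> g)"

end

theory Submission
  imports Defs
begin

lemma cocycle_0:
  assumes "cocycle \<alpha>"
  shows "\<alpha> 0 g = \<alpha> 0 0" "\<alpha> g 0 = \<alpha> 0 0"
proof -
  have "\<alpha> 0 0 - \<alpha> 0 (0 + g) + \<alpha> (0 + 0) g - \<alpha> 0 g = 0"
    using assms unfolding cocycle_def by blast
  then show "\<alpha> 0 g = \<alpha> 0 0" by (simp add: algebra_simps)
  have "\<alpha> g 0 - \<alpha> g (0 + 0) + \<alpha> (g + 0) 0 - \<alpha> 0 0 = 0"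
    using assms unfolding cocycle_def by blast
  then show "\<alpha> g 0 = \<alpha> 0 0" by (simp add: algebra_simps)
qed

lemma hom_eq:
  assumes "ext_hom \<alpha> \<alpha>' \<Phi>" "is_lift \<phi> \<Phi>"
  shows "fst (\<Phi> (a1 + a2 + \<alpha> g1 g2, g1 + g2)) = fst (\<Phi> (a1, g1)) + fst (\<Phi> (a2, g2)) + \<alpha>' (\<phi> g1) (\<phi> g2)"
proof -
  have "\<Phi> (emul \<alpha> (a1, g1) (a2, g2)) = emul \<alpha>' (\<Phi> (a1, g1)) (\<Phi> (a2, g2))"
    using assms(1) unfolding ext_hom_def by blast
  then show ?thesis using assms(2) unfolding emul_def is_lift_def by simp
qed

lemma lift_form:
  fixes \<alpha> \<alpha>' :: "'g::ab_group_add \<Rightarrow> 'g \<Rightarrow> 'a::ab_group_add"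
  assumes "cocycle \<alpha>" "cocycle \<alpha>'" "ext_hom \<alpha> \<alpha>' \<Phi>" "is_lift \<phi> \<Phi>"
  shows "\<exists>f. add_hom f \<and> (\<forall>a g. \<Phi> (a, g) = (f a + fst (\<Phi> (0, g)), \<phi> g)) \<and>
     (\<forall>g1 g2. coboundary (\<lambda>g. fst (\<Phi> (0, g))) g1 g2 = pushforward f \<alpha> g1 g2 - pullback \<phi> \<alpha>' g1 g2)"
proof -
  define F where "F x = fst (\<Phi> x)" for x
  define c where "c = \<alpha> 0 0"
  define c' where "c' = \<alpha>' 0 0"
  define f where "f a = F (a - c, 0) + c'" for a
  have H: "F (a1 + a2 + \<alpha> g1 g2, g1 + g2) = F (a1, g1) + F (a2, g2) + \<alpha>' (\<phi> g1) (\<phi> g2)" for a1 a2 g1 g2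
    unfolding F_def by (rule hom_eq[OF assms(3,4)])
  have phi0: "\<phi> 0 = 0"
  proof -
    have "\<phi> (0 + 0) = \<phi> 0 + \<phi> 0"
      using assms(3,4) unfolding ext_hom_def is_lift_def emul_def
      by (metis snd_conv)
    then show ?thesis by simp
  qed
  have fadd: "add_hom f"
    unfolding add_hom_def
  proof (intro allI)
    fix x y
    have "F ((x - c) + (y - c) + \<alpha> 0 0, 0 + 0) = F (x - c, 0) + F (y - c, 0) + \<alpha>' (\<phi> 0) (\<phi> 0)"
      by (rule H)
    then show "f (x + y) = f x + f y" unfolding f_def c_def c'_def using phi0
      by (simp add: algebra_simps)
  qed
  have shift: "F (a, g) = f a + F (0, g)" for a g
  proof -
    have "F ((a - c) + 0 + \<alpha> 0 g, 0 + g) = F (a - c, 0) + F (0, g) + \<alpha>' (\<phi> 0) (\<phi> g)"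
      by (rule H)
    moreover have "\<alpha> 0 g = c" "\<alpha>' (\<phi> 0) (\<phi> g) = c'"
      using phi0 cocycle_0[OF assms(1)] cocycle_0[OF assms(2)] unfolding c_def c'_def by auto
    ultimately show ?thesis unfolding f_def
      by (simp add: algebra_simps)
  qed
  have form: "\<Phi> (a, g) = (f a + fst (\<Phi> (0, g)), \<phi> g)" for a g
    using shift[of a g] assms(4) unfolding F_def is_lift_def by (metis prod.collapse)
  have cob: "coboundary (\<lambda>g. fst (\<Phi> (0, g))) g1 g2 = pushforward f \<alpha> g1 g2 - pullback \<phi> \<alpha>' g1 g2" for g1 g2
  proof -
    have "F (0 + 0 + \<alpha> g1 g2, g1 + g2) = F (0, g1) + F (0, g2) + \<alpha>' (\<phi> g1) (\<phi> g2)" by (rule H)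
    then have "f (\<alpha> g1 g2) + F (0, g1 + g2) = F (0, g1) + F (0, g2) + \<alpha>' (\<phi> g1) (\<phi> g2)"
      using shift[of "\<alpha> g1 g2" "g1 + g2"] by simp
    then show ?thesis unfolding coboundary_def pushforward_def pullback_def F_def
      by (simp add: algebra_simps)
  qed
  show ?thesis using fadd form cob by blast
qed

lemma add_hom_0: "add_hom f \<Longrightarrow> f 0 = 0"
  unfolding add_hom_def by (metis add_cancel_right_right add_0)

lemma add_hom_minus: "add_hom f \<Longrightarrow> f (x - y) = f x - f y"
  unfolding add_hom_def by (metis add_diff_cancel diff_add_cancel)

lemma eta_cond:
  fixes \<alpha> \<alpha>' :: "'g::ab_group_add \<Rightarrow> 'g \<Rightarrow> 'a::ab_group_add"
  assumes "add_hom f" "\<And>g1 g2. coboundary \<mu> g1 g2 = pushforward f \<alpha> g1 g2 - pullback \<phi> \<alpha>' g1 g2"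
  shows "f (eta \<alpha> g1 g2) = eta \<alpha>' (\<phi> g1) (\<phi> g2)"
proof -
  have sy: "coboundary \<mu> g1 g2 = coboundary \<mu> g2 g1" unfolding coboundary_def by (simp add: add.commute)
 have "f (\<alpha> g1 g2 - \<alpha> g2 g1) = f (\<alpha> g1 g2) - f (\<alpha> g2 g1)" by (rule add_hom_minus[OF assms(1)])
  moreover have "f (\<alpha> g1 g2) - \<alpha>' (\<phi> g1) (\<phi> g2) = f (\<alpha> g2 g1) - \<alpha>' (\<phi> g2) (\<phi> g1)"
    using assms(2)[of g1 g2] assms(2)[of g2 g1] sy unfolding pushforward_def pullback_def by metis
  ultimately show ?thesis
    unfolding eta_def by (metis (no_types, lifting) add_diff_cancel_left' diff_add_cancel diff_diff_eq2 eq_diff_eq)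
qed

lemma uniq_hom:
  fixes f \<psi> :: "'a::ab_group_add \<Rightarrow> 'a"
  assumes "add_hom f" "add_hom \<psi>" "gen_subgroup S = UNIV" "\<forall>s\<in>S. f s = \<psi> s"
  shows "f = \<psi>"
proof -
  have "add_subgroup {a. f a = \<psi> a}"
    unfolding add_subgroup_def using assms(1,2) add_hom_0[OF assms(1)] add_hom_0[OF assms(2)] add_hom_minus[of f 0] add_hom_minus[of \<psi> 0]
    by (auto simp: add_hom_def)
  then have "gen_subgroup S \<subseteq> {a. f a = \<psi> a}"
    unfolding gen_subgroup_def using assms(4) by blast
  then show ?thesis using assms(3) by auto
qed

lemma construct:
  fixes \<alpha> \<alpha>' :: "'g::ab_group_add \<Rightarrow> 'g \<Rightarrow> 'a::ab_group_add"
  assumes "add_hom \<psi>" "add_hom \<phi>" "cohomologous (pullback \<phi> \<alpha>') (pushforward \<psi> \<alpha>)"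
  shows "\<exists>\<mu>. ext_hom \<alpha> \<alpha>' (\<lambda>(a, g). (\<psi> a + \<mu> g, \<phi> g)) \<and> is_lift \<phi> (\<lambda>(a, g). (\<psi> a + \<mu> g, \<phi> g))"
proof -
  obtain \<mu>0 where m: "\<And>g1 g2. pullback \<phi> \<alpha>' g1 g2 - pushforward \<psi> \<alpha> g1 g2 = coboundary \<mu>0 g1 g2"
    using assms(3) unfolding cohomologous_def by blast
  have "ext_hom \<alpha> \<alpha>' (\<lambda>(a, g). (\<psi> a + - \<mu>0 g, \<phi> g))"
    unfolding ext_hom_def
  proof (intro allI)
    fix x y :: "'a \<times> 'g"
    obtain a1 g1 where x: "x = (a1, g1)" by fastforce
    obtain a2 g2 where y: "y = (a2, g2)" by fastforce
    have e: "\<alpha>' (\<phi> g1) (\<phi> g2) - \<psi> (\<alpha> g1 g2) = \<mu>0 g1 + \<mu>0 g2 - \<mu>0 (g1 + g2)"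
      using m[of g1 g2] unfolding pullback_def pushforward_def coboundary_def .
    have "\<psi> (a1 + a2 + \<alpha> g1 g2) = \<psi> a1 + \<psi> a2 + \<psi> (\<alpha> g1 g2)" "\<phi> (g1 + g2) = \<phi> g1 + \<phi> g2"
      using assms(1,2) unfolding add_hom_def by auto
    then show "(\<lambda>(a, g). (\<psi> a + - \<mu>0 g, \<phi> g)) (emul \<alpha> x y) =
           emul \<alpha>' ((\<lambda>(a, g). (\<psi> a + - \<mu>0 g, \<phi> g)) x) ((\<lambda>(a, g). (\<psi> a + - \<mu>0 g, \<phi> g)) y)"
      unfolding x y emul_def using e by (simp add: algebra_simps)
  qed
  moreover have "is_lift \<phi> (\<lambda>(a, g). (\<psi> a + - \<mu>0 g, \<phi> g))" unfolding is_lift_def by simp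
  ultimately show ?thesis by (intro exI[of _ "\<lambda>g. - \<mu>0 g"]) simp
qed

lemma neg_cob: "coboundary (\<lambda>g. - m g) g1 g2 = - coboundary m g1 g2"
  unfolding coboundary_def by (simp add: algebra_simps)

theorem proposition1p1:
  fixes p :: nat
    and \<alpha> \<alpha>' :: "'g::{ab_group_add,finite} \<Rightarrow> 'g \<Rightarrow> 'a::{ab_group_add,finite}"
  assumes "prime p"
    and "is_p_group p (UNIV :: 'g set)"
    and "is_p_group p (UNIV :: 'a set)"
    and "cocycle \<alpha>" and "cocycle \<alpha>'"
    and "gen_subgroup (range (\<lambda>(g1, g2). eta \<alpha> g1 g2)) = UNIV"
    and "gen_subgroup (range (\<lambda>(g1, g2). eta \<alpha>' g1 g2)) = UNIV"
  shows
    "(\<forall>\<phi>::'g \<Rightarrow> 'g. add_hom \<phi> \<longrightarrow>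
       ((\<exists>\<Phi>. ext_hom \<alpha> \<alpha>' \<Phi> \<and> is_lift \<phi> \<Phi>) \<longleftrightarrow>
        (\<exists>\<psi>::'a \<Rightarrow> 'a. add_hom \<psi> \<and>
           (\<forall>g1 g2. \<psi> (eta \<alpha> g1 g2) = eta \<alpha>' (\<phi> g1) (\<phi> g2)) \<and>
           cohomologous (pullback \<phi> \<alpha>') (pushforward \<psi> \<alpha>))))
   \<and> (\<forall>(\<phi>::'g \<Rightarrow> 'g) (\<psi>::'a \<Rightarrow> 'a). add_hom \<phi> \<and> add_hom \<psi> \<and>
        (\<forall>g1 g2. \<psi> (eta \<alpha> g1 g2) = eta \<alpha>' (\<phi> g1) (\<phi> g2)) \<and>
        cohomologous (pullback \<phi> \<alpha>') (pushforward \<psi> \<alpha>) \<longrightarrow>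
        (\<forall>\<Phi>. ext_hom \<alpha> \<alpha>' \<Phi> \<and> is_lift \<phi> \<Phi> \<longrightarrow>
           (\<exists>!\<mu>::'g \<Rightarrow> 'a. (\<forall>a g. \<Phi> (a, g) = (\<psi> a + \<mu> g, \<phi> g)) \<and>
              (\<forall>g1 g2. coboundary \<mu> g1 g2 = pushforward \<psi> \<alpha> g1 g2 - pullback \<phi> \<alpha>' g1 g2))))
   \<and> (\<forall>\<phi>::'g \<Rightarrow> 'g. add_hom \<phi> \<and> bij \<phi> \<longrightarrow>
       ((\<exists>\<Phi>. ext_hom \<alpha> \<alpha>' \<Phi> \<and> bij \<Phi> \<and> is_lift \<phi> \<Phi>) \<longleftrightarrow>
        (\<exists>\<psi>::'a \<Rightarrow> 'a. add_hom \<psi> \<and> bij \<psi> \<and>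
           (\<forall>g1 g2. \<psi> (eta \<alpha> g1 g2) = eta \<alpha>' (\<phi> g1) (\<phi> g2)) \<and>
           cohomologous (pullback \<phi> \<alpha>') (pushforward \<psi> \<alpha>))))"
proof (intro conjI allI impI)
  fix \<phi> :: "'g \<Rightarrow> 'g"
  assume ph: "add_hom \<phi>"
  show "(\<exists>\<Phi>. ext_hom \<alpha> \<alpha>' \<Phi> \<and> is_lift \<phi> \<Phi>) \<longleftrightarrow>
        (\<exists>\<psi>::'a \<Rightarrow> 'a. add_hom \<psi> \<and>
           (\<forall>g1 g2. \<psi> (eta \<alpha> g1 g2) = eta \<alpha>' (\<phi> g1) (\<phi> g2)) \<and>
           cohomologous (pullback \<phi> \<alpha>') (pushforward \<psi> \<alpha>))"
  proof
    assume "\<exists>\<Phi>. ext_hom \<alpha> \<alpha>' \<Phi> \<and> is_lift \<phi> \<Phi>"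
    then obtain \<Phi> where P: "ext_hom \<alpha> \<alpha>' \<Phi>" "is_lift \<phi> \<Phi>" by blast
    obtain f where f: "add_hom f" "\<forall>a g. \<Phi> (a, g) = (f a + fst (\<Phi> (0, g)), \<phi> g)"
      "\<forall>g1 g2. coboundary (\<lambda>g. fst (\<Phi> (0, g))) g1 g2 = pushforward f \<alpha> g1 g2 - pullback \<phi> \<alpha>' g1 g2"
      using lift_form[OF assms(4,5) P] by blast
    have "cohomologous (pullback \<phi> \<alpha>') (pushforward f \<alpha>)"
      unfolding cohomologous_def
      by (rule exI[of _ "\<lambda>g. - fst (\<Phi> (0, g))"]) (simp add: neg_cob f(3))
    then show "\<exists>\<psi>::'a \<Rightarrow> 'a. add_hom \<psi> \<and>
           (\<forall>g1 g2. \<psi> (eta \<alpha> g1 g2) = eta \<alpha>' (\<phi> g1) (\<phi> g2)) \<and>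
           cohomologous (pullback \<phi> \<alpha>') (pushforward \<psi> \<alpha>)"
      using f(1) eta_cond[OF f(1)] f(3) by blast
  next
    assume "\<exists>\<psi>::'a \<Rightarrow> 'a. add_hom \<psi> \<and>
           (\<forall>g1 g2. \<psi> (eta \<alpha> g1 g2) = eta \<alpha>' (\<phi> g1) (\<phi> g2)) \<and>
           cohomologous (pullback \<phi> \<alpha>') (pushforward \<psi> \<alpha>)"
    then show "\<exists>\<Phi>. ext_hom \<alpha> \<alpha>' \<Phi> \<and> is_lift \<phi> \<Phi>" using construct[OF _ ph] by blast
  qed
next
  fix \<phi> :: "'g \<Rightarrow> 'g" and \<psi> :: "'a \<Rightarrow> 'a" and \<Phi>
  assume H: "add_hom \<phi> \<and> add_hom \<psi> \<and>
        (\<forall>g1 g2. \<psi> (eta \<alpha> g1 g2) = eta \<alpha>' (\<phi> g1) (\<phi> g2)) \<and>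
        cohomologous (pullback \<phi> \<alpha>') (pushforward \<psi> \<alpha>)"
    and P: "ext_hom \<alpha> \<alpha>' \<Phi> \<and> is_lift \<phi> \<Phi>"
  obtain f where f: "add_hom f" "\<forall>a g. \<Phi> (a, g) = (f a + fst (\<Phi> (0, g)), \<phi> g)"
      "\<forall>g1 g2. coboundary (\<lambda>g. fst (\<Phi> (0, g))) g1 g2 = pushforward f \<alpha> g1 g2 - pullback \<phi> \<alpha>' g1 g2"
    using lift_form[OF assms(4,5)] P by blast
  have "f = \<psi>"
  proof (rule uniq_hom[OF f(1) _ assms(6)])
    show "add_hom \<psi>" using H by blast
    show "\<forall>s\<in>range (\<lambda>(g1, g2). eta \<alpha> g1 g2). f s = \<psi> s"
    proof
      fix s assume "s \<in> range (\<lambda>(g1, g2). eta \<alpha> g1 g2)"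
      then obtain a b where s: "s = eta \<alpha> a b" by auto
      have "f (eta \<alpha> a b) = eta \<alpha>' (\<phi> a) (\<phi> b)"
        by (rule eta_cond[OF f(1)]) (use f(3) in blast)
      then show "f s = \<psi> s" using s H by simp
    qed
  qed
  have ps0: "\<psi> 0 = 0" using H add_hom_0 by blast
  show "\<exists>!\<mu>::'g \<Rightarrow> 'a. (\<forall>a g. \<Phi> (a, g) = (\<psi> a + \<mu> g, \<phi> g)) \<and>
              (\<forall>g1 g2. coboundary \<mu> g1 g2 = pushforward \<psi> \<alpha> g1 g2 - pullback \<phi> \<alpha>' g1 g2)"
  proof (rule ex1I[of _ "\<lambda>g. fst (\<Phi> (0, g))"])
    show "(\<forall>a g. \<Phi> (a, g) = (\<psi> a + fst (\<Phi> (0, g)), \<phi> g)) \<and>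
              (\<forall>g1 g2. coboundary (\<lambda>g. fst (\<Phi> (0, g))) g1 g2 = pushforward \<psi> \<alpha> g1 g2 - pullback \<phi> \<alpha>' g1 g2)"
      using f \<open>f = \<psi>\<close> by blast
  next
    fix \<mu> :: "'g \<Rightarrow> 'a"
    assume "(\<forall>a g. \<Phi> (a, g) = (\<psi> a + \<mu> g, \<phi> g)) \<and>
              (\<forall>g1 g2. coboundary \<mu> g1 g2 = pushforward \<psi> \<alpha> g1 g2 - pullback \<phi> \<alpha>' g1 g2)"
    then have "\<Phi> (0, g) = (\<mu> g, \<phi> g)" for g using ps0 by simp
    then show "\<mu> = (\<lambda>g. fst (\<Phi> (0, g)))" by auto
  qed
next
  fix \<phi> :: "'g \<Rightarrow> 'g"
  assume ph: "add_hom \<phi> \<and> bij \<phi>"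
  show "(\<exists>\<Phi>. ext_hom \<alpha> \<alpha>' \<Phi> \<and> bij \<Phi> \<and> is_lift \<phi> \<Phi>) \<longleftrightarrow>
        (\<exists>\<psi>::'a \<Rightarrow> 'a. add_hom \<psi> \<and> bij \<psi> \<and>
           (\<forall>g1 g2. \<psi> (eta \<alpha> g1 g2) = eta \<alpha>' (\<phi> g1) (\<phi> g2)) \<and>
           cohomologous (pullback \<phi> \<alpha>') (pushforward \<psi> \<alpha>))"
  proof
    assume "\<exists>\<Phi>. ext_hom \<alpha> \<alpha>' \<Phi> \<and> bij \<Phi> \<and> is_lift \<phi> \<Phi>"
    then obtain \<Phi> where P: "ext_hom \<alpha> \<alpha>' \<Phi>" "is_lift \<phi> \<Phi>" "bij \<Phi>" by blast
    obtain f where f: "add_hom f" "\<forall>a g. \<Phi> (a, g) = (f a + fst (\<Phi> (0, g)), \<phi> g)"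
      "\<forall>g1 g2. coboundary (\<lambda>g. fst (\<Phi> (0, g))) g1 g2 = pushforward f \<alpha> g1 g2 - pullback \<phi> \<alpha>' g1 g2"
      using lift_form[OF assms(4,5) P(1,2)] by blast
    have "cohomologous (pullback \<phi> \<alpha>') (pushforward f \<alpha>)"
      unfolding cohomologous_def
      by (rule exI[of _ "\<lambda>g. - fst (\<Phi> (0, g))"]) (simp add: neg_cob f(3))
    moreover have "inj f"
    proof (rule injI)
      fix x y assume "f x = f y"
      then have "\<Phi> (x, 0) = \<Phi> (y, 0)" using f(2)[rule_format, of x 0] f(2)[rule_format, of y 0] by metis
      then show "x = y" using P(3) unfolding bij_def inj_def by blast
    qed
    then have "bij f" using finite_UNIV_inj_surj[of f] unfolding bij_def by simp
    ultimately show "\<exists>\<psi>::'a \<Rightarrow> 'a. add_hom \<psi> \<and> bij \<psi> \<and>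
           (\<forall>g1 g2. \<psi> (eta \<alpha> g1 g2) = eta \<alpha>' (\<phi> g1) (\<phi> g2)) \<and>
           cohomologous (pullback \<phi> \<alpha>') (pushforward \<psi> \<alpha>)"
      using f(1) eta_cond[OF f(1)] f(3) by blast
  next
    assume "\<exists>\<psi>::'a \<Rightarrow> 'a. add_hom \<psi> \<and> bij \<psi> \<and>
           (\<forall>g1 g2. \<psi> (eta \<alpha> g1 g2) = eta \<alpha>' (\<phi> g1) (\<phi> g2)) \<and>
           cohomologous (pullback \<phi> \<alpha>') (pushforward \<psi> \<alpha>)"
    then obtain \<psi> where ps: "add_hom \<psi>" "bij \<psi>" "cohomologous (pullback \<phi> \<alpha>') (pushforward \<psi> \<alpha>)"
      by blast
    obtain \<mu> where m: "ext_hom \<alpha> \<alpha>' (\<lambda>(a, g). (\<psi> a + \<mu> g, \<phi> g))" "is_lift \<phi> (\<lambda>(a, g). (\<psi> a + \<mu> g, \<phi> g))"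
      using construct[OF ps(1) _ ps(3)] ph by blast
    have "inj (\<lambda>(a, g). (\<psi> a + \<mu> g, \<phi> g))"
    proof (rule injI)
      fix x y :: "'a \<times> 'g"
      assume e: "(\<lambda>(a, g). (\<psi> a + \<mu> g, \<phi> g)) x = (\<lambda>(a, g). (\<psi> a + \<mu> g, \<phi> g)) y"
      obtain a1 g1 where x: "x = (a1, g1)" by fastforce
      obtain a2 g2 where y: "y = (a2, g2)" by fastforce
      have "\<phi> g1 = \<phi> g2" using e x y by simp
      then have g: "g1 = g2" using ph unfolding bij_def inj_def by blast
      then have "\<psi> a1 = \<psi> a2" using e x y by simp
      then have "a1 = a2" using ps(2) unfolding bij_def inj_def by blast
      then show "x = y" using x y g by simp
    qed
    then have "bij (\<lambda>(a, g). (\<psi> a + \<mu> g, \<phi> g))"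
      using finite_UNIV_inj_surj[of "\<lambda>(a, g). (\<psi> a + \<mu> g, \<phi> g)"] unfolding bij_def by simp
    then show "\<exists>\<Phi>. ext_hom \<alpha> \<alpha>' \<Phi> \<and> bij \<Phi> \<and> is_lift \<phi> \<Phi>" using m by blast
  qed
qed

end
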